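(* Let $\Sigma^2=\{0,1\}^{\mathbb{N}}$ with the metric $d(x,y)=0$ if $x=y$ and $d(x,y)=\frac1k$ if $x\neq y$, where $k=\min\{n\ge 0\mid x_n\ne y_n\}+1$, and let $\sigma:\Sigma^2\to\Sigma^2$ be the shift $\sigma(x_0x_1x_2\cdots)=x_1x_2\cdots$. Let $X\subset\Sigma^2$ be a nonempty set with $\sigma(X)\subset X$, equipped with the restricted metric. If $\sigma|_X$ is accessible, then $\sigma^2|_X$ is accessible.
   Context: A continuous map $f$ of a metric space $(X,d)$ into itself is accessible if for every $\epsilon>0$ and all nonempty open sets $U,V\subset X$ there exist $x\in U$, $y\in V$ and $n\in\mathbb{Z}^+=\{1,2,\dots\}$ with $d(f^n(x),f^n(y))<\epsilon$. Here $\mathbb{N}=\{0,1,2,\dots\}$ and open sets are open in $X$. *)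

theory Defs
  imports Complex_Main
begin

type_synonym seq2 = "nat \<Rightarrow> bool"

definition sdist :: "seq2 \<Rightarrow> seq2 \<Rightarrow> real" where
  "sdist x y = (if x = y then 0 else 1 / real (Suc (LEAST n. x n \<noteq> y n)))"

definition shift :: "seq2 \<Rightarrow> seq2" where
  "shift x = (\<lambda>n. x (Suc n))"

definition open_in_sub :: "seq2 set \<Rightarrow> seq2 set \<Rightarrow> bool" where
  "open_in_sub X U \<longleftrightarrow> U \<subseteq> X \<and>
     (\<forall>x\<in>U. \<exists>r>0. \<forall>y\<in>X. sdist x y < r \<longrightarrow> y \<in> U)"

definition accessible_on :: "seq2 set \<Rightarrow> (seq2 \<Rightarrow> seq2) \<Rightarrow> bool" where
  "accessible_on X f \<longleftrightarrow>
     (\<forall>\<epsilon>>0. \<forall>U V. open_in_sub X U \<and> open_in_sub X V \<and> U \<noteq> {} \<and> V \<noteq> {} \<longrightarrow>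
        (\<exists>x\<in>U. \<exists>y\<in>V. \<exists>n::nat. n \<ge> 1 \<and> sdist ((f ^^ n) x) ((f ^^ n) y) < \<epsilon>))"

end

theory Submission
  imports Defs
begin

lemma sdist_less_iff:
  assumes "N \<ge> 1"
  shows "sdist x y < 1 / real N \<longleftrightarrow> (\<forall>i<N. x i = y i)"
proof (cases "x = y")
  case True
  then show ?thesis using assms by (simp add: sdist_def)
next
  case False
  define L where "L = (LEAST n. x n \<noteq> y n)"
  have ex: "\<exists>n. x n \<noteq> y n" using False by auto
  have L1: "x L \<noteq> y L" unfolding L_def by (rule LeastI_ex[OF ex])
  have L2: "\<And>i. i < L \<Longrightarrow> x i = y i" unfolding L_def using not_less_Least by blast
  have "sdist x y = 1 / real (Suc L)" using False by (simp add: sdist_def L_def)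
  moreover have "1 / real (Suc L) < 1 / real N \<longleftrightarrow> N < Suc L"
    using assms by (simp add: frac_less_eq field_simps) (metis of_nat_Suc of_nat_less_iff add.commute)
  moreover have "N < Suc L \<longleftrightarrow> (\<forall>i<N. x i = y i)"
    using L1 L2 by (metis le_less_trans less_Suc_eq_le not_le)
  ultimately show ?thesis by simp
qed

lemma shift_pow: "(shift ^^ k) x = (\<lambda>i. x (i + k))"
  by (induction k arbitrary: x) (auto simp: shift_def)

lemma shift2_pow: "((shift \<circ> shift) ^^ m) x = (\<lambda>i. x (i + 2 * m))"
  by (induction m arbitrary: x) (auto simp: shift_def)

theorem lemma3p5:
  fixes X :: "seq2 set"
  assumes "X \<noteq> {}"
    and "shift ` X \<subseteq> X"
    and "accessible_on X shift"
  shows "accessible_on X (shift \<circ> shift)"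
  unfolding accessible_on_def
proof (intro allI impI)
  fix \<epsilon> :: real and U V
  assume e: "\<epsilon> > 0" and UV: "open_in_sub X U \<and> open_in_sub X V \<and> U \<noteq> {} \<and> V \<noteq> {}"
  obtain N :: nat where N: "1 / real N < \<epsilon>" "N \<ge> 1"
  proof -
    obtain M :: nat where "inverse \<epsilon> < real M" using reals_Archimedean2 by blast
    hence "1 / real (Suc M) < \<epsilon>" using e
      by (metis add.commute divide_less_eq_1 inverse_eq_divide less_add_one
          less_trans of_nat_Suc of_nat_0_less_iff pos_divide_less_eq zero_less_Suc
          inverse_less_imp_less mult.commute) 
    thus ?thesis using that[of "Suc M"] by simp
  qed
  have "1 / real (Suc N) > 0" by simp
  with assms(3) UV obtain x y n where xy: "x \<in> U" "y \<in> V" "n \<ge> 1"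
    "sdist ((shift ^^ n) x) ((shift ^^ n) y) < 1 / real (Suc N)"
    unfolding accessible_on_def by blast
  hence agree: "\<forall>i<Suc N. x (i + n) = y (i + n)"
    using sdist_less_iff[of "Suc N"] by (simp add: shift_pow)
  define m where "m = (n + 1) div 2"
  have m1: "m \<ge> 1" using xy(3) unfolding m_def by simp
  have "2 * m = n \<or> 2 * m = n + 1" unfolding m_def by presburger
  hence "\<forall>i<N. x (i + 2 * m) = y (i + 2 * m)"
    using agree by (metis Suc_eq_plus1 add.assoc add.commute less_SucI not_less_eq)
  hence "sdist (((shift \<circ> shift) ^^ m) x) (((shift \<circ> shift) ^^ m) y) < 1 / real N"
    using sdist_less_iff[OF N(2)] by (simp add: shift2_pow)
  hence "sdist (((shift \<circ> shift) ^^ m) x) (((shift \<circ> shift) ^^ m) y) < \<epsilon>"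
    using N(1) by linarith
  with xy m1 show "\<exists>x\<in>U. \<exists>y\<in>V. \<exists>n. 1 \<le> n \<and> sdist (((shift \<circ> shift) ^^ n) x) (((shift \<circ> shift) ^^ n) y) < \<epsilon>"
    by fastforce
qed

end
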